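(* Let $A$ be a finite set and let $A^+=\bigcup_{n\in\mathbb{N}}A^n$ be the set of nonempty finite words over $A$. Then $(A^+,\le_{\mathrm{E}})$ is a well partially ordered set, i.e. $\le_{\mathrm{E}}$ is a partial order on $A^+$ satisfying the descending chain condition and having no infinite antichains; equivalently, for every sequence $(\mathbf{x}^{(k)})_{k\in\mathbb{N}}$ in $A^+$ there are $i<j$ with $\mathbf{x}^{(i)}\le_{\mathrm{E}}\mathbf{x}^{(j)}$.
   Context: For $\mathbf{a}=(a_1,\dots,a_n)\in A^+$ and $b\in A$, define $\mathrm{firstOcc}(\mathbf{a},b):=0$ if $b\notin\{a_1,\dots,a_n\}$ and $\mathrm{firstOcc}(\mathbf{a},b):=\min\{i : a_i=b\}$ otherwise. For $\mathbf{a}=(a_1,\dots,a_m)$, $\mathbf{b}=(b_1,\dots,b_n)\in A^+$, we write $\mathbf{a}\le_{\mathrm{E}}\mathbf{b}$ if there is a strictly increasing function $h:\{1,\dots,m\}\to\{1,\dots,n\}$ such that (1) $a_i=b_{h(i)}$ for all $i$; (2) $\{a_1,\dots,a_m\}=\{b_1,\dots,b_n\}$; (3) for every $c\in\{a_1,\dots,a_m\}$, $h(\mathrm{firstOcc}(\mathbf{a},c))=\mathrm{firstOcc}(\mathbf{b},c)$. Such an $h$ is said to witness $\mathbf{a}\le_{\mathrm{E}}\mathbf{b}$. *)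

theory Defs
  imports Main
begin

text \<open>Words are lists; positions are 1-based as in the paper: a_i = a ! (i - 1).\<close>

definition firstOcc :: "'a list \<Rightarrow> 'a \<Rightarrow> nat" where
  "firstOcc a b = (if b \<notin> set a then 0
     else (LEAST i. 1 \<le> i \<and> i \<le> length a \<and> a ! (i - 1) = b))"

definition witnessE :: "'a list \<Rightarrow> 'a list \<Rightarrow> (nat \<Rightarrow> nat) \<Rightarrow> bool" where
  "witnessE a b h \<longleftrightarrow>
     strict_mono_on {1..length a} h \<and>
     h ` {1..length a} \<subseteq> {1..length b} \<and>
     (\<forall>i\<in>{1..length a}. a ! (i - 1) = b ! (h i - 1)) \<and>
     set a = set b \<and>
     (\<forall>c\<in>set a. h (firstOcc a c) = firstOcc b c)"

definition leE :: "'a list \<Rightarrow> 'a list \<Rightarrow> bool" where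
  "leE a b \<longleftrightarrow> (\<exists>h. witnessE a b h)"

definition words_plus :: "'a set \<Rightarrow> 'a list set" where
  "words_plus A = {xs. xs \<noteq> [] \<and> set xs \<subseteq> A}"

end

theory Submission
  imports Defs "HOL-Library.Sublist" "HOL-Library.Infinite_Set"
begin

lemma pigeon_subseq:
  fixes f :: "nat \<Rightarrow> 'b"
  assumes "finite S" "\<forall>k. f k \<in> S"
  shows "\<exists>\<psi> c. strict_mono (\<psi> :: nat \<Rightarrow> nat) \<and> (\<forall>k. f (\<psi> k) = c)"
proof -
  have "finite (f ` UNIV)" using assms by (metis finite_subset image_subsetI)
  then obtain y where y: "infinite (f -` {y})"
    using inf_img_fin_dom[of f UNIV] by auto
  have "strict_mono (enumerate (f -` {y}))" using strict_mono_enumerate[OF y] .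
  moreover have "\<forall>k. f (enumerate (f -` {y}) k) = y"
    using enumerate_in_set[OF y] by auto
  ultimately show ?thesis by (intro exI[of _ "enumerate (f -` {y})"] exI[of _ y] conjI)
qed

definition bad :: "(nat \<Rightarrow> 'a list) \<Rightarrow> bool" where
  "bad f \<longleftrightarrow> (\<forall>i j. i < j \<longrightarrow> \<not> subseq (f i) (f j))"

definition PP :: "'a set \<Rightarrow> 'a list list \<Rightarrow> bool" where
  "PP S xs \<longleftrightarrow> (\<exists>g. bad g \<and> (\<forall>k. set (g k) \<subseteq> S) \<and> (\<forall>i<length xs. g i = xs ! i))"

primrec mb :: "'a set \<Rightarrow> nat \<Rightarrow> 'a list list" where
  "mb S 0 = []"
| "mb S (Suc n) = mb S n @ [arg_min length (\<lambda>x. PP S (mb S n @ [x]))]"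

lemma mb_len: "length (mb S n) = n"
  by (induct n) auto

lemma PP_ext: "PP S xs \<Longrightarrow> \<exists>x. PP S (xs @ [x])"
  unfolding PP_def
  apply clarify
  subgoal for g apply (rule exI[of _ "g (length xs)"], rule exI[of _ g])
    by (auto simp: nth_append less_Suc_eq)
  done

lemma mb_PP: "PP S [] \<Longrightarrow> PP S (mb S n)"
proof (induct n)
  case 0 then show ?case by simp
next
  case (Suc n)
  then obtain x where "PP S (mb S n @ [x])" using PP_ext by blast
  then show ?case using arg_min_nat_lemma[of "\<lambda>x. PP S (mb S n @ [x])" x length] by simp
qed

lemma mb_min: "PP S (mb S n @ [x]) \<Longrightarrow> length (mb S (Suc n) ! n) \<le> length x"
  using arg_min_nat_lemma[of "\<lambda>x. PP S (mb S n @ [x])" x length]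
  by (simp add: nth_append mb_len)

lemma mb_prefix: "i < n \<Longrightarrow> mb S n ! i = mb S (Suc i) ! i"
proof (induct n)
  case 0 then show ?case by simp
next
  case (Suc n)
  then show ?case by (cases "i = n") (auto simp: nth_append mb_len less_Suc_eq)
qed

declare mb.simps[simp del]

theorem higman:
  fixes f :: "nat \<Rightarrow> 'a list"
  assumes fin: "finite S" and f: "\<forall>k. set (f k) \<subseteq> S"
  shows "\<exists>i j. i < j \<and> subseq (f i) (f j)"
proof (rule ccontr)
  assume "\<not> ?thesis"
  then have "bad f" unfolding bad_def by blast
  with f have P0: "PP S []" unfolding PP_def by auto
  define m where "m i = mb S (Suc i) ! i" for i
  have mbm: "i < n \<Longrightarrow> mb S n ! i = m i" for i n using mb_prefix m_def by metis
  have mbad: "bad m" and mS: "\<forall>k. set (m k) \<subseteq> S"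
  proof -
    show "bad m" unfolding bad_def
    proof (intro allI impI)
      fix i j :: nat assume ij: "i < j"
      from mb_PP[OF P0, of "Suc j"] obtain g where g: "bad g" "\<forall>i<Suc j. g i = mb S (Suc j) ! i"
        unfolding PP_def by (auto simp: mb_len)
      then have "g i = m i" "g j = m j" using ij mbm by auto
      then show "\<not> subseq (m i) (m j)" using g(1) ij unfolding bad_def by metis
    qed
    show "\<forall>k. set (m k) \<subseteq> S"
    proof
      fix k
      from mb_PP[OF P0, of "Suc k"] obtain g where g: "\<forall>k. set (g k) \<subseteq> S" "\<forall>i<Suc k. g i = mb S (Suc k) ! i"
        unfolding PP_def by (auto simp: mb_len)
      then show "set (m k) \<subseteq> S" using m_def by (metis lessI)
    qed
  qed
  have mmin: "\<And>g n. bad g \<Longrightarrow> \<forall>k. set (g k) \<subseteq> S \<Longrightarrow> \<forall>i<n. g i = m i \<Longrightarrow> length (m n) \<le> length (g n)"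
  proof -
    fix g n assume g: "bad g" "\<forall>k. set (g k) \<subseteq> S" "\<forall>i<n. g i = m i"
    have "PP S (mb S n @ [g n])" unfolding PP_def using g
      by (intro exI[of _ g]) (auto simp: mb_len nth_append mbm less_Suc_eq)
    then show "length (m n) \<le> length (g n)" using mb_min m_def by metis
  qed
  have ne: "m i \<noteq> []" for i
  proof
    assume "m i = []"
    then have "subseq (m i) (m (Suc i))" by simp
    then show False using mbad unfolding bad_def by blast
  qed
  have "\<forall>k. hd (m k) \<in> S" using mS ne by (metis hd_in_set subsetD)
  then obtain \<phi> a where phi: "strict_mono (\<phi> :: nat \<Rightarrow> nat)" "\<forall>k. hd (m (\<phi> k)) = a"
    using pigeon_subseq[OF fin, of "\<lambda>k. hd (m k)"] by blast
  have mphi: "m (\<phi> k) = a # tl (m (\<phi> k))" for k using phi(2) ne by (metis list.collapse)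
  define g where "g i = (if i < \<phi> 0 then m i else tl (m (\<phi> (i - \<phi> 0))))" for i
  have gS: "\<forall>k. set (g k) \<subseteq> S" using mS unfolding g_def by (auto dest: list.set_sel(2)[OF ne])
  have gbad: "bad g" unfolding bad_def
  proof (intro allI impI notI)
    fix i j :: nat assume ij: "i < j" and s: "subseq (g i) (g j)"
    show False
    proof (cases "j < \<phi> 0")
      case True
      then show ?thesis using s ij mbad unfolding g_def bad_def by auto
    next
      case jge: False
      have tlsub: "subseq (g j) (m (\<phi> (j - \<phi> 0)))" using jge unfolding g_def
        by (metis mphi list_emb_Cons subseq_order.order_refl)
      show ?thesis
      proof (cases "i < \<phi> 0")
        case True
        have "\<phi> 0 \<le> \<phi> (j - \<phi> 0)" using phi(1) by (simp add: strict_mono_less_eq)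
        then have "i < \<phi> (j - \<phi> 0)" using True by simp
        moreover have "subseq (m i) (m (\<phi> (j - \<phi> 0)))"
          using s tlsub True unfolding g_def by (auto intro: subseq_order.order_trans)
        ultimately show ?thesis using mbad unfolding bad_def by blast
      next
        case False
        have lt: "\<phi> (i - \<phi> 0) < \<phi> (j - \<phi> 0)" using phi(1) False jge ij
          by (simp add: strict_mono_less)
        have "subseq (a # tl (m (\<phi> (i - \<phi> 0)))) (a # tl (m (\<phi> (j - \<phi> 0))))"
          using s False jge unfolding g_def by simp
        then have "subseq (m (\<phi> (i - \<phi> 0))) (m (\<phi> (j - \<phi> 0)))" using mphi by metis
        then show ?thesis using lt mbad unfolding bad_def by blast
      qed
    qed
  qed
  have "length (m (\<phi> 0)) \<le> length (g (\<phi> 0))"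
    by (rule mmin[OF gbad gS]) (simp add: g_def)
  moreover have "length (g (\<phi> 0)) < length (m (\<phi> 0))" unfolding g_def using ne by simp
  ultimately show False by simp
qed


lemma firstOcc_props:
  assumes "c \<in> set a"
  shows "1 \<le> firstOcc a c \<and> firstOcc a c \<le> length a \<and> a ! (firstOcc a c - 1) = c"
proof -
  obtain i where i: "i < length a" "a ! i = c" using assms by (metis in_set_conv_nth)
  have "1 \<le> Suc i \<and> Suc i \<le> length a \<and> a ! (Suc i - 1) = c" using i by simp
  then have "1 \<le> (LEAST i. 1 \<le> i \<and> i \<le> length a \<and> a ! (i - 1) = c) \<and>
     (LEAST i. 1 \<le> i \<and> i \<le> length a \<and> a ! (i - 1) = c) \<le> length a \<and>
     a ! ((LEAST i. 1 \<le> i \<and> i \<le> length a \<and> a ! (i - 1) = c) - 1) = c"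
    by (rule LeastI)
  then show ?thesis using assms unfolding firstOcc_def by simp
qed

lemma emb_idx:
  "list_emb (=) xs ys \<Longrightarrow> \<exists>h. (\<forall>i<length xs. h i < length ys \<and> xs ! i = ys ! (h i))
     \<and> (\<forall>i j. i < j \<and> j < length xs \<longrightarrow> h i < h j)"
proof (induct rule: list_emb.induct)
  case (list_emb_Nil ys)
  then show ?case by auto
next
  case (list_emb_Cons xs ys y)
  then obtain h where h: "\<forall>i<length xs. h i < length ys \<and> xs ! i = ys ! (h i)"
     "\<forall>i j. i < j \<and> j < length xs \<longrightarrow> h i < h j" by blast
  show ?case by (rule exI[of _ "\<lambda>i. Suc (h i)"]) (use h in auto)
next
  case (list_emb_Cons2 x y xs ys)
  then obtain h where h: "\<forall>i<length xs. h i < length ys \<and> xs ! i = ys ! (h i)"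
     "\<forall>i j. i < j \<and> j < length xs \<longrightarrow> h i < h j" by blast
  let ?g = "\<lambda>i. if i = 0 then 0 else Suc (h (i - 1))"
  have a: "\<forall>i<length (x # xs). ?g i < length (y # ys) \<and> (x # xs) ! i = (y # ys) ! (?g i)"
  proof (intro allI impI)
    fix i assume "i < length (x # xs)"
    then show "?g i < length (y # ys) \<and> (x # xs) ! i = (y # ys) ! (?g i)"
      using h(1) list_emb_Cons2(1) by (cases i) auto
  qed
  have b: "\<forall>i j. i < j \<and> j < length (x # xs) \<longrightarrow> ?g i < ?g j"
  proof (intro allI impI)
    fix i j assume "i < j \<and> j < length (x # xs)"
    then show "?g i < ?g j"
      using h(2) by (cases i; cases j) auto
  qed
  show ?case by (rule exI[of _ ?g], rule conjI[OF a b])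
qed

definition mk :: "'a list \<Rightarrow> ('a \<times> bool) list" where
  "mk a = map (\<lambda>i. (a ! i, Suc i = firstOcc a (a ! i))) [0..<length a]"

lemma mk_len [simp]: "length (mk a) = length a" by (simp add: mk_def)
lemma mk_nth: "i < length a \<Longrightarrow> mk a ! i = (a ! i, Suc i = firstOcc a (a ! i))"
  by (simp add: mk_def)
lemma mk_set: "set (mk a) \<subseteq> set a \<times> UNIV"
  by (auto simp: mk_def)

lemma mk_leE:
  assumes s: "subseq (mk x) (mk y)" and st: "set x = set y"
  shows "leE x y"
proof -
  obtain h0 where h0: "\<forall>i<length x. h0 i < length y \<and> mk x ! i = mk y ! (h0 i)"
     "\<forall>i j. i < j \<and> j < length x \<longrightarrow> h0 i < h0 j" using emb_idx[OF s] by auto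
  have h0': "\<And>i. i < length x \<Longrightarrow> h0 i < length y \<and> x ! i = y ! h0 i \<and>
      (Suc i = firstOcc x (x ! i)) = (Suc (h0 i) = firstOcc y (y ! h0 i))"
    using h0(1) by (auto simp: mk_nth)
  define h where "h i = Suc (h0 (i - 1))" for i
  have "witnessE x y h" unfolding witnessE_def
  proof (intro conjI ballI)
    show "strict_mono_on {1..length x} h"
    proof (rule strict_mono_onI)
      fix r s assume "r \<in> {1..length x}" "s \<in> {1..length x}" "r < s"
      then have "r - 1 < s - 1" "s - 1 < length x" by auto
      then show "h r < h s" using h0(2) by (simp add: h_def)
    qed
    show "h ` {1..length x} \<subseteq> {1..length y}"
      using h0' by (auto simp: h_def Suc_le_eq)
    show "x ! (i - 1) = y ! (h i - 1)" if "i \<in> {1..length x}" for i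
      using h0' that by (auto simp: h_def)
    show "set x = set y" by fact
    show "h (firstOcc x c) = firstOcc y c" if c: "c \<in> set x" for c
    proof -
      let ?p = "firstOcc x c - 1"
      have p: "?p < length x" "x ! ?p = c" "Suc ?p = firstOcc x c"
        using firstOcc_props[OF c] by auto
      then have "Suc (h0 ?p) = firstOcc y (y ! h0 ?p)" "y ! h0 ?p = c"
        using h0'[OF p(1)] by auto
      then show ?thesis unfolding h_def by simp
    qed
  qed
  then show ?thesis unfolding leE_def by blast
qed

lemma leE_refl: "leE x x"
  unfolding leE_def witnessE_def
  by (rule exI[of _ id]) (auto simp: strict_mono_on_def)

lemma leE_trans:
  assumes "leE x y" "leE y z" shows "leE x z"
proof -
  obtain h1 h2 where h1: "witnessE x y h1" and h2: "witnessE y z h2"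
    using assms unfolding leE_def by blast
  have "witnessE x z (h2 \<circ> h1)" unfolding witnessE_def
  proof (intro conjI ballI)
    show "strict_mono_on {1..length x} (h2 \<circ> h1)"
    proof (rule strict_mono_onI)
      fix r s assume "r \<in> {1..length x}" "s \<in> {1..length x}" "r < s"
      moreover have "strict_mono_on {1..length x} h1" "h1 ` {1..length x} \<subseteq> {1..length y}"
        using h1 unfolding witnessE_def by auto
      ultimately have "h1 r < h1 s" "h1 r \<in> {1..length y}" "h1 s \<in> {1..length y}"
        by (blast dest: strict_mono_onD)+
      moreover have "strict_mono_on {1..length y} h2" using h2 unfolding witnessE_def by blast
      ultimately show "(h2 \<circ> h1) r < (h2 \<circ> h1) s"
        by (simp add: strict_mono_onD)
    qed
    show "(h2 \<circ> h1) ` {1..length x} \<subseteq> {1..length z}"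
      using h1 h2 unfolding witnessE_def by auto
    show "x ! (i - 1) = z ! ((h2 \<circ> h1) i - 1)" if i: "i \<in> {1..length x}" for i
    proof -
      have "h1 i \<in> {1..length y}" "x ! (i - 1) = y ! (h1 i - 1)"
        using h1 i unfolding witnessE_def by blast+
      then show ?thesis using h2 unfolding witnessE_def by simp
    qed
    show "set x = set z" using h1 h2 unfolding witnessE_def by auto
    show "(h2 \<circ> h1) (firstOcc x c) = firstOcc z c" if "c \<in> set x" for c
      using h1 h2 that unfolding witnessE_def by auto
  qed
  then show ?thesis unfolding leE_def by blast
qed

lemma sm_bounds:
  assumes sm: "strict_mono_on {1..n} h" and im: "h ` {1..n} \<subseteq> {1..(m::nat)}"
  shows "i \<in> {1..n} \<Longrightarrow> i \<le> h i"
    and "\<And>k i. n - i = k \<Longrightarrow> i \<in> {1..n} \<Longrightarrow> h i + k \<le> m"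
proof -
  show "i \<in> {1..n} \<Longrightarrow> i \<le> h i"
  proof (induct i)
    case 0 then show ?case by simp
  next
    case (Suc i)
    show ?case
    proof (cases "i = 0")
      case True then show ?thesis using im Suc.prems by (auto simp: image_subset_iff)
    next
      case False
      then have "i \<in> {1..n}" using Suc.prems by auto
      moreover have "Suc i \<in> {1..n}" using Suc.prems by auto
      ultimately have "i \<le> h i" "h i < h (Suc i)" using Suc.hyps strict_mono_onD[OF sm, of i "Suc i"] by auto
      then show ?thesis by simp
    qed
  qed
  fix k i
  show "n - i = k \<Longrightarrow> i \<in> {1..n} \<Longrightarrow> h i + k \<le> m"
  proof (induct k arbitrary: i)
    case 0
    then have "i \<in> {1..n}" "i = n" by auto
    then have "h i \<in> {1..m}" using im by blast
    then show ?case using \<open>i = n\<close> by simp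
  next
    case (Suc k)
    then have "Suc i \<in> {1..n}" "n - Suc i = k" by auto
    then have "h (Suc i) + k \<le> m" "h i < h (Suc i)" using Suc strict_mono_onD[OF sm, of i "Suc i"] by auto
    then show ?case by simp
  qed
qed

lemma leE_antisym:
  assumes "leE x y" "leE y x" shows "x = y"
proof -
  obtain h1 h2 where h1: "witnessE x y h1" and h2: "witnessE y x h2"
    using assms unfolding leE_def by blast
  have s1: "strict_mono_on {1..length x} h1" "h1 ` {1..length x} \<subseteq> {1..length y}"
    using h1 unfolding witnessE_def by auto
  have s2: "strict_mono_on {1..length y} h2" "h2 ` {1..length y} \<subseteq> {1..length x}"
    using h2 unfolding witnessE_def by auto
  have le1: "length x \<le> length y"
  proof (cases "length x = 0")
    case False
    then have "length x \<in> {1..length x}" by (simp add: Suc_le_eq)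
    then show ?thesis using sm_bounds(2)[OF s1, of "length x" 0] sm_bounds(1)[OF s1, of "length x"]
      by auto
  qed simp
  have le2: "length y \<le> length x"
  proof (cases "length y = 0")
    case False
    then have "length y \<in> {1..length y}" by (simp add: Suc_le_eq)
    then show ?thesis using sm_bounds(2)[OF s2, of "length y" 0] sm_bounds(1)[OF s2, of "length y"]
      by auto
  qed simp
  have eq: "length x = length y" using le1 le2 by simp
  have hid: "h1 i = i" if "i \<in> {1..length x}" for i
    using sm_bounds(1)[OF s1, of i] sm_bounds(2)[OF s1, of i "length x - i"] that eq by auto
  show ?thesis
  proof (rule nth_equalityI)
    show "length x = length y" by fact
    fix i assume "i < length x"
    then have "Suc i \<in> {1..length x}" by auto
    then show "x ! i = y ! i" using hid h1 unfolding witnessE_def by fastforce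
  qed
qed

theorem lemma3p1:
  fixes A :: "'a set"
  assumes "finite A"
  shows "(\<forall>x\<in>words_plus A. leE x x)
    \<and> (\<forall>x\<in>words_plus A. \<forall>y\<in>words_plus A. leE x y \<and> leE y x \<longrightarrow> x = y)
    \<and> (\<forall>x\<in>words_plus A. \<forall>y\<in>words_plus A. \<forall>z\<in>words_plus A.
          leE x y \<and> leE y z \<longrightarrow> leE x z)
    \<and> (\<forall>f :: nat \<Rightarrow> 'a list. (\<forall>k. f k \<in> words_plus A) \<longrightarrow>
          (\<exists>i j. i < j \<and> leE (f i) (f j)))"
proof (intro conjI ballI allI impI)
  show "leE x x" for x by (rule leE_refl)
  show "x = y" if "leE x y \<and> leE y x" for x y using that leE_antisym by blast
  show "leE x z" if "leE x y \<and> leE y z" for x y z using that leE_trans by blast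
  fix f :: "nat \<Rightarrow> 'a list"
  assume f: "\<forall>k. f k \<in> words_plus A"
  have "\<forall>k. set (f k) \<in> Pow A" using f unfolding words_plus_def by auto
  then obtain \<psi> S where psi: "strict_mono (\<psi> :: nat \<Rightarrow> nat)" "\<forall>k. set (f (\<psi> k)) = S"
    using pigeon_subseq[of "Pow A" "\<lambda>k. set (f k)"] assms by blast
  have "\<forall>k. set (mk (f (\<psi> k))) \<subseteq> A \<times> UNIV"
    using f mk_set unfolding words_plus_def by fastforce
  moreover have "finite (A \<times> (UNIV :: bool set))" using assms by simp
  ultimately obtain i j where ij: "i < j" "subseq (mk (f (\<psi> i))) (mk (f (\<psi> j)))"
    using higman[of "A \<times> UNIV" "\<lambda>k. mk (f (\<psi> k))"] by blast
  have "leE (f (\<psi> i)) (f (\<psi> j))" using mk_leE[OF ij(2)] psi(2) by simp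
  moreover have "\<psi> i < \<psi> j" using psi(1) ij(1) by (simp add: strict_mono_less)
  ultimately show "\<exists>i j. i < j \<and> leE (f i) (f j)" by blast
qed

end
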